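(* Let $\tau>0$, let $\mathbf v$ be a smooth vector field on an open set of $(t,\mathbf x)\in(0,T)\times\mathbb R^d$, $\mathbf W:=\frac12(\nabla\mathbf v-(\nabla\mathbf v)^{\mathsf T})$, $\mathbf D:=\frac12(\nabla\mathbf v+(\nabla\mathbf v)^{\mathsf T})$, and let $\mathbf B$ be a smooth field of symmetric positive definite matrices with $\mathbf H:=\frac12\log\mathbf B$. Then $\mathbf B$ solves $\partial_t\mathbf B+(\mathbf v\cdot\nabla)\mathbf B+\frac1\tau(\mathbf B-\mathbf I)=(\nabla\mathbf v)\mathbf B+\mathbf B(\nabla\mathbf v)^{\mathsf T}$ if and only if $\mathbf H$ solves $\partial_t\mathbf H+(\mathbf v\cdot\nabla)\mathbf H+2\mathsf{Ad}_{\mathbf H}\boldsymbol\Omega^{\log}+\frac1{2\tau}(\mathbf I-e^{-2\mathbf H})=\mathbf D,$ where $\boldsymbol\Omega^{\log}:=\mathbf W-\mathcal L(2\mathsf{Ad}_{\mathbf H})\mathbf D$ with $\mathcal L(x)=\coth x-\frac1x$ ($x\ne0$), $\mathcal L(0)=0$. Moreover $\boldsymbol\Omega^{\log}$ is antisymmetric. Likewise, $\mathbf H$ solves $\partial_t\mathbf H+(\mathbf v\cdot\nabla)\mathbf H+2\mathsf{Ad}_{\mathbf H}\boldsymbol\Omega^{\log}+\frac1\tau\mathbf H=\mathbf D$ if and only if $\mathbf B$ solves $\partial_t\mathbf B+(\mathbf v\cdot\nabla)\mathbf B-(\nabla\mathbf v)\mathbf B-\mathbf B(\nabla\mathbf v)^{\mathsf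 T}+\frac1\tau\mathbf B\log\mathbf B=\mathbf 0$.
   Context: $(\nabla\mathbf v)_{ij}=\partial_{x_j}v_i$. $\mathsf{Ad}_{\mathbf G}\mathbf X=\tfrac12(\mathbf G\mathbf X-\mathbf X\mathbf G)$; for symmetric $\mathbf G=\mathbf Q\operatorname{diag}(g_i)\mathbf Q^{\mathsf T}$ ($\mathbf Q$ orthogonal) and real $h$, $h(\mathsf{Ad}_{\mathbf G})\mathbf X:=\mathbf Q\big([h(\frac{g_i-g_j}2)]\odot(\mathbf Q^{\mathsf T}\mathbf X\mathbf Q)\big)\mathbf Q^{\mathsf T}$ ($\odot$ entrywise product). Matrix exponential and logarithm are defined spectrally. *)

theory Defs
  imports "HOL-Analysis.Analysis"
begin

fun Ck_on :: "nat \<Rightarrow> ('a::real_normed_vector \<Rightarrow> 'b::real_normed_vector) \<Rightarrow> 'a set \<Rightarrow> bool" where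
  "Ck_on 0 f U = continuous_on U f"
| "Ck_on (Suc k) f U = ((\<forall>x\<in>U. f differentiable (at x)) \<and>
      (\<forall>h. Ck_on k (\<lambda>x. frechet_derivative f (at x) h) U))"

definition smooth_on :: "('a::real_normed_vector \<Rightarrow> 'b::real_normed_vector) \<Rightarrow> 'a set \<Rightarrow> bool" where
  "smooth_on f U \<longleftrightarrow> (\<forall>k. Ck_on k f U)"

definition diag_mat :: "real^'n \<Rightarrow> real^'n^'n" where
  "diag_mat g = (\<chi> i j. if i = j then g $ i else 0)"

text \<open>A chosen orthogonal diagonalisation G = Q diag(g) Q^T (meaningful for symmetric G).\<close>
definition sym_eig :: "real^'n^'n \<Rightarrow> (real^'n^'n) \<times> (real^'n)" where
  "sym_eig G = (SOME (Q, g). orthogonal_matrix Q \<and> G = Q ** diag_mat g ** transpose Q)"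

definition mat_fun :: "(real \<Rightarrow> real) \<Rightarrow> real^'n^'n \<Rightarrow> real^'n^'n" where
  "mat_fun h G = (case sym_eig G of (Q, g) \<Rightarrow> Q ** diag_mat (\<chi> i. h (g $ i)) ** transpose Q)"

definition mat_exp :: "real^'n^'n \<Rightarrow> real^'n^'n" where
  "mat_exp G = mat_fun exp G"

definition mat_log :: "real^'n^'n \<Rightarrow> real^'n^'n" where
  "mat_log G = mat_fun ln G"

definition Ad :: "real^'n^'n \<Rightarrow> real^'n^'n \<Rightarrow> real^'n^'n" where
  "Ad G X = (1/2) *\<^sub>R (G ** X - X ** G)"

text \<open>h(Ad_G) X := Q ([h((g_i - g_j)/2)] \<odot> (Q^T X Q)) Q^T for symmetric G.\<close>
definition Ad_fun :: "(real \<Rightarrow> real) \<Rightarrow> real^'n^'n \<Rightarrow> real^'n^'n \<Rightarrow> real^'n^'n" where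
  "Ad_fun h G X = (case sym_eig G of (Q, g) \<Rightarrow>
      (let Y = transpose Q ** X ** Q in
        Q ** (\<chi> i j. h ((g $ i - g $ j) / 2) * Y $ i $ j) ** transpose Q))"

text \<open>h(2 Ad_H) = (\<lambda>x. h (2 x))(Ad_H).\<close>
definition Lfun :: "real \<Rightarrow> real" where
  "Lfun x = (if x = 0 then 0 else cosh x / sinh x - 1 / x)"

definition sym_pos_def_mat :: "real^'n^'n \<Rightarrow> bool" where
  "sym_pos_def_mat A \<longleftrightarrow> transpose A = A \<and> (\<forall>y. y \<noteq> 0 \<longrightarrow> y \<bullet> (A *v y) > 0)"

definition dt :: "(real \<times> (real^'n) \<Rightarrow> 'b::real_normed_vector) \<Rightarrow> real \<times> (real^'n) \<Rightarrow> 'b" where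
  "dt F p = frechet_derivative F (at p) (1, 0)"

definition adv :: "(real \<times> (real^'n) \<Rightarrow> real^'n) \<Rightarrow> (real \<times> (real^'n) \<Rightarrow> 'b::real_normed_vector) \<Rightarrow> real \<times> (real^'n) \<Rightarrow> 'b" where
  "adv v F p = (\<Sum>j\<in>UNIV. (v p $ j) *\<^sub>R frechet_derivative F (at p) (0, axis j 1))"

text \<open>(\<nabla>v)_{ij} = \<partial>_{x_j} v_i.\<close>
definition grad :: "(real \<times> (real^'n) \<Rightarrow> real^'n) \<Rightarrow> real \<times> (real^'n) \<Rightarrow> real^'n^'n" where
  "grad v p = (\<chi> i j. frechet_derivative v (at p) (0, axis j 1) $ i)"

end

theory Submission
  imports Defs
begin


lemma inner_mat_sym:
  fixes A :: "real^'n^'n"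
  shows "x \<bullet> (A *v y) = (transpose A *v x) \<bullet> y"
  by (simp add: dot_lmul_matrix)

lemma sym_eigvec_exists:
  fixes A :: "real^'n^'n"
  assumes symA: "transpose A = A" and V: "subspace V" and inv: "\<forall>x\<in>V. A *v x \<in> V"
    and ne: "\<exists>x\<in>V. x \<noteq> 0"
  shows "\<exists>u\<in>V. norm u = 1 \<and> A *v u = (u \<bullet> (A *v u)) *\<^sub>R u"
proof -
  define K where "K = V \<inter> sphere 0 1"
  have cK: "compact K" unfolding K_def
    by (intro closed_Int_compact closed_subspace compact_sphere V)
  obtain x where x: "x \<in> V" "x \<noteq> 0" using ne by auto
  have "x /\<^sub>R norm x \<in> K" unfolding K_def using x V by (simp add: subspace_scale)
  hence neK: "K \<noteq> {}" by auto
  define f where "f = (\<lambda>u::real^'n. u \<bullet> (A *v u))"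
  have cf: "continuous_on K f" unfolding f_def
    by (intro continuous_intros linear_continuous_on linear_linear[THEN iffD1] matrix_vector_mul_linear)
  obtain u where uK: "u \<in> K" and umax: "\<forall>y\<in>K. f y \<le> f u"
    using continuous_attains_sup[OF cK neK cf] by auto
  define \<mu> where "\<mu> = f u"
  have uV: "u \<in> V" and nu: "norm u = 1" using uK by (auto simp: K_def)
  have bound: "f y \<le> \<mu> * (norm y)^2" if yV: "y \<in> V" for y
  proof (cases "y = 0")
    case True then show ?thesis by (simp add: f_def)
  next
    case False
    hence "y /\<^sub>R norm y \<in> K" using yV V by (simp add: K_def subspace_scale)
    hence "f (y /\<^sub>R norm y) \<le> \<mu>" using umax \<mu>_def by auto
    moreover have "f y = f (y /\<^sub>R norm y) * (norm y)^2"
      using False by (simp add: f_def matrix_vector_mult_scaleR power2_eq_square) (simp add: field_simps)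
    ultimately show ?thesis using mult_right_mono[of "f (y /\<^sub>R norm y)" \<mu> "(norm y)^2"] by simp
  qed
  define w where "w = A *v u - \<mu> *\<^sub>R u"
  have wV: "w \<in> V" unfolding w_def using V inv uV by (simp add: subspace_diff subspace_scale)
  have sym: "a \<bullet> (A *v b) = b \<bullet> (A *v a)" for a b
    using inner_mat_sym[of a A b] symA inner_commute by metis
  have uu: "u \<bullet> u = 1" using nu by (simp add: norm_eq_1)
  have wu: "w \<bullet> u = 0"
    by (simp add: w_def inner_diff_left uu \<mu>_def f_def inner_commute[of "A *v u" u])
  have wAu: "w \<bullet> (A *v u) = w \<bullet> w"
    unfolding w_def by (simp add: inner_diff_left inner_diff_right uu \<mu>_def f_def inner_commute algebra_simps)
  define c where "c = w \<bullet> w"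
  define KK where "KK = \<mu> * (w \<bullet> w) - f w"
  have key: "2 * t * c \<le> t^2 * KK" for t
  proof -
    have "u + t *\<^sub>R w \<in> V" using uV wV V by (simp add: subspace_add subspace_scale)
    from bound[OF this] have "f (u + t *\<^sub>R w) \<le> \<mu> * (norm (u + t *\<^sub>R w))^2" .
    moreover have "(norm (u + t *\<^sub>R w))^2 = 1 + t^2 * (w \<bullet> w)"
      unfolding power2_norm_eq_inner
      by (simp add: inner_add_left inner_add_right uu wu inner_commute[of u w] power2_eq_square)
    moreover have "f (u + t *\<^sub>R w) = \<mu> + 2 * t * c + t^2 * f w"
    proof -
      have "f (u + t *\<^sub>R w) = u \<bullet> (A *v u) + t * (u \<bullet> (A *v w)) + t * (w \<bullet> (A *v u)) + t * t * (w \<bullet> (A *v w))"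
        unfolding f_def by (simp add: matrix_vector_right_distrib matrix_vector_mult_scaleR
          inner_add_left inner_add_right algebra_simps)
      also have "\<dots> = \<mu> + 2 * t * c + t^2 * f w"
        using sym[of u w] wAu by (simp add: \<mu>_def f_def c_def power2_eq_square)
      finally show ?thesis .
    qed
    ultimately show ?thesis by (simp add: KK_def algebra_simps)
  qed
  have c0: "c \<ge> 0" by (simp add: c_def)
  have "c = 0"
  proof (rule ccontr)
    assume "c \<noteq> 0" hence cp: "c > 0" using c0 by auto
    define t where "t = c / (\<bar>KK\<bar> + 1)"
    have tp: "t > 0" using cp by (simp add: t_def)
    have "2 * t * c \<le> t^2 * KK" by (rule key)
    hence "2 * c \<le> t * KK" using tp by (simp add: power2_eq_square)
    also have "t * KK \<le> t * \<bar>KK\<bar>" using tp by (simp add: mult_left_mono)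
    also have "t * \<bar>KK\<bar> < c" unfolding t_def using cp by (simp add: divide_simps)
    finally show False using cp by simp
  qed
  hence "w = 0" by (simp add: c_def)
  hence "A *v u = \<mu> *\<^sub>R u" by (simp add: w_def)
  thus ?thesis using uV nu by (auto simp: \<mu>_def f_def)
qed

lemma mm_nth: "((M::real^'n^'m) ** (N::real^'p^'n)) $ i $ j = (\<Sum>k\<in>UNIV. M$i$k * N$k$j)"
  by (simp add: matrix_matrix_mult_def)

lemma mul_diag: "((M::real^'n^'m) ** diag_mat g) $ i $ j = M$i$j * g$j"
  by (simp add: mm_nth diag_mat_def if_distrib if_distribR cong: if_cong)

lemma diag_mul: "(diag_mat g ** (M::real^'m^'n)) $ i $ j = g$i * M$i$j"
  by (simp add: mm_nth diag_mat_def if_distrib if_distribR cong: if_cong)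

lemma ortho_eig_set:
  fixes A :: "real^'n^'n"
  assumes symA: "transpose A = A"
  shows "k \<le> CARD('n) \<Longrightarrow> \<exists>S. finite S \<and> card S = k \<and> pairwise orthogonal S \<and>
           (\<forall>u\<in>S. norm u = 1 \<and> (\<exists>c. A *v u = c *\<^sub>R u))"
proof (induction k)
  case 0 show ?case by (intro exI[of _ "{}"]) auto
next
  case (Suc k)
  then obtain S where S: "finite S" "card S = k" "pairwise orthogonal S"
    "\<forall>u\<in>S. norm u = 1 \<and> (\<exists>c. A *v u = c *\<^sub>R u)" by (meson Suc_leD)
  define V where "V = {y. \<forall>x\<in>S. orthogonal x y}"
  have sV: "subspace V" by (simp add: V_def subspace_orthogonal_to_vectors)
  have inv: "\<forall>x\<in>V. A *v x \<in> V"
  proof (intro ballI)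
    fix x assume xV: "x \<in> V"
    show "A *v x \<in> V" unfolding V_def
    proof (intro CollectI ballI)
      fix s assume sS: "s \<in> S"
      then obtain c where c: "A *v s = c *\<^sub>R s" using S(4) by auto
      have "s \<bullet> (A *v x) = (transpose A *v s) \<bullet> x" by (rule inner_mat_sym)
      also have "\<dots> = c * (s \<bullet> x)" using c symA by simp
      also have "\<dots> = 0" using xV sS by (simp add: V_def orthogonal_def)
      finally show "orthogonal s (A *v x)" by (simp add: orthogonal_def)
    qed
  qed
  have "0 \<notin> S" using S(4) by auto
  hence indep: "independent S" using pairwise_orthogonal_independent[OF S(3)] by simp
  have "dim S < DIM(real^'n)" using dim_eq_card_independent[OF indep] S(2) Suc.prems by simp
  then obtain x where x: "x \<noteq> 0" "\<And>y. y \<in> span S \<Longrightarrow> orthogonal x y"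
    using orthogonal_to_subspace_exists by blast
  have xV: "x \<in> V" unfolding V_def using x(2) span_base orthogonal_commute by blast
  obtain u where uV: "u \<in> V" and nu: "norm u = 1" and eu: "A *v u = (u \<bullet> (A *v u)) *\<^sub>R u"
    using sym_eigvec_exists[OF symA sV inv] xV x(1) by blast
  have uS: "u \<notin> S"
  proof
    assume "u \<in> S"
    hence "orthogonal u u" using uV by (simp add: V_def)
    thus False using nu by (simp add: orthogonal_def)
  qed
  show ?case
  proof (intro exI[of _ "insert u S"] conjI)
    show "finite (insert u S)" using S(1) by simp
    show "card (insert u S) = Suc k" using S(1,2) uS by simp
    show "pairwise orthogonal (insert u S)"
      using S(3) uV unfolding pairwise_insert V_def by (auto simp: orthogonal_commute)
    show "\<forall>v\<in>insert u S. norm v = 1 \<and> (\<exists>c. A *v v = c *\<^sub>R v)" using S(4) nu eu by blast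
  qed
qed

lemma spectral:
  fixes A :: "real^'n^'n"
  assumes symA: "transpose A = A"
  shows "\<exists>Q g. orthogonal_matrix Q \<and> A = Q ** diag_mat g ** transpose Q"
proof -
  obtain S where S: "finite S" "card S = CARD('n)" "pairwise orthogonal S"
    "\<forall>u\<in>S. norm u = 1 \<and> (\<exists>c. A *v u = c *\<^sub>R u)" using ortho_eig_set[OF symA, of "CARD('n)"] by auto
  obtain f where f: "bij_betw f (UNIV::'n set) S"
    using finite_same_card_bij[of "UNIV::'n set" S] S by auto
  have fS: "f j \<in> S" for j using f by (auto simp: bij_betw_def)
  have finj: "f j = f k \<Longrightarrow> j = k" for j k using f by (auto simp: bij_betw_def inj_on_def)
  define Q :: "real^'n^'n" where "Q = (\<chi> i j. f j $ i)"
  define g where "g = (\<chi> j. f j \<bullet> (A *v f j))"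
  have nf: "f j \<bullet> f j = 1" for j using S(4) fS[of j] by (simp add: norm_eq_1)
  have eig: "A *v f j = g $ j *\<^sub>R f j" for j
  proof -
    obtain c where c: "A *v f j = c *\<^sub>R f j" using S(4) fS[of j] by auto
    have "g $ j = c" using c nf[of j] by (simp add: g_def)
    thus ?thesis using c by simp
  qed
  have orth: "f j \<bullet> f k = (if j = k then 1 else 0)" for j k
    using nf S(3) fS finj unfolding pairwise_def orthogonal_def by metis
  have QQ: "transpose Q ** Q = mat 1"
    by (simp add: vec_eq_iff mm_nth Q_def transpose_def mat_def orth[symmetric] inner_vec_def)
  hence oQ: "orthogonal_matrix Q" by (simp add: orthogonal_matrix)
  hence QQ': "Q ** transpose Q = mat 1" by (simp add: orthogonal_matrix_def)
  have AQ: "A ** Q = Q ** diag_mat g"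
  proof -
    have "(A ** Q) $ i $ j = (Q ** diag_mat g) $ i $ j" for i j
    proof -
      have "(A ** Q) $ i $ j = (A *v f j) $ i"
        by (simp add: mm_nth Q_def matrix_vector_mult_def)
      also have "\<dots> = g $ j * f j $ i" using eig[of j] by simp
      finally show ?thesis by (simp add: mul_diag Q_def)
    qed
    thus ?thesis by (simp add: vec_eq_iff)
  qed
  have "A = A ** (Q ** transpose Q)" using QQ' by simp
  also have "\<dots> = Q ** diag_mat g ** transpose Q" by (simp add: matrix_mul_assoc AQ)
  finally show ?thesis using oQ by blast
qed


lemma orth_TQ: "orthogonal_matrix (Q::real^'n^'n) \<Longrightarrow> transpose Q ** Q = mat 1"
  by (simp add: orthogonal_matrix_def)
lemma orth_QT: "orthogonal_matrix (Q::real^'n^'n) \<Longrightarrow> Q ** transpose Q = mat 1"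
  by (simp add: orthogonal_matrix_def)

lemma intertwine:
  fixes Q Q' :: "real^'n^'n"
  assumes oQ: "orthogonal_matrix Q" and oQ': "orthogonal_matrix Q'"
    and eq: "Q ** diag_mat g ** transpose Q = Q' ** diag_mat g' ** transpose Q'"
  shows "(transpose Q' ** Q) $ i $ j \<noteq> 0 \<Longrightarrow> g' $ i = g $ j"
proof -
  define R where "R = transpose Q' ** Q"
  have "transpose Q' ** (Q ** diag_mat g ** transpose Q) ** Q = R ** diag_mat g"
    by (simp add: R_def matrix_mul_assoc[symmetric] orth_TQ[OF oQ])
  moreover have "transpose Q' ** (Q' ** diag_mat g' ** transpose Q') ** Q = diag_mat g' ** R"
    by (simp add: R_def matrix_mul_assoc orth_TQ[OF oQ'])
  ultimately have "R ** diag_mat g = diag_mat g' ** R" using eq by simp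
  hence "R $ i $ j * g $ j = g' $ i * R $ i $ j"
    by (metis mul_diag diag_mul)
  moreover assume "(transpose Q' ** Q) $ i $ j \<noteq> 0"
  ultimately show ?thesis by (simp add: R_def)
qed

lemma sym_eig_spec:
  assumes "orthogonal_matrix Q" "G = Q ** diag_mat g ** transpose Q"
  shows "orthogonal_matrix (fst (sym_eig G)) \<and>
         G = fst (sym_eig G) ** diag_mat (snd (sym_eig G)) ** transpose (fst (sym_eig G))"
proof -
  have ex: "\<exists>x. (\<lambda>(Q, g). orthogonal_matrix Q \<and> G = Q ** diag_mat g ** transpose Q) x"
    using assms by auto
  have "(\<lambda>(Q, g). orthogonal_matrix Q \<and> G = Q ** diag_mat g ** transpose Q) (sym_eig G)"
    unfolding sym_eig_def by (rule someI_ex[OF ex])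
  thus ?thesis by (simp add: case_prod_beta)
qed

lemma mat_fun_rep:
  fixes Q :: "real^'n^'n"
  assumes oQ: "orthogonal_matrix Q"
  shows "mat_fun h (Q ** diag_mat g ** transpose Q) = Q ** diag_mat (\<chi> i. h (g$i)) ** transpose Q"
proof -
  define G where "G = Q ** diag_mat g ** transpose Q"
  obtain Q' g' where se: "sym_eig G = (Q', g')" by fastforce
  have oQ': "orthogonal_matrix Q'" and eq: "G = Q' ** diag_mat g' ** transpose Q'"
    using sym_eig_spec[OF oQ G_def] se by auto
  define R where "R = transpose Q' ** Q"
  have tw: "R $ i $ j \<noteq> 0 \<Longrightarrow> g' $ i = g $ j" for i j
    using intertwine[OF oQ oQ'] eq G_def R_def by metis
  have comm: "diag_mat (\<chi> i. h (g'$i)) ** R = R ** diag_mat (\<chi> i. h (g$i))"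
  proof -
    have "(diag_mat (\<chi> i. h (g'$i)) ** R) $ i $ j = (R ** diag_mat (\<chi> i. h (g$i))) $ i $ j" for i j
      using tw[of i j] by (cases "R $ i $ j = 0") (auto simp: mul_diag diag_mul)
    thus ?thesis by (simp add: vec_eq_iff)
  qed
  have "mat_fun h G = Q' ** diag_mat (\<chi> i. h (g'$i)) ** transpose Q'"
    by (simp add: mat_fun_def se)
  also have "\<dots> = Q' ** diag_mat (\<chi> i. h (g'$i)) ** (R ** transpose Q)"
    by (simp add: R_def matrix_mul_assoc[symmetric] orth_QT[OF oQ])
  also have "\<dots> = Q' ** (diag_mat (\<chi> i. h (g'$i)) ** R) ** transpose Q"
    by (simp add: matrix_mul_assoc)
  also have "\<dots> = (Q' ** R) ** diag_mat (\<chi> i. h (g$i)) ** transpose Q"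
    by (simp add: comm matrix_mul_assoc)
  also have "Q' ** R = Q" by (simp add: R_def matrix_mul_assoc orth_QT[OF oQ'])
  finally show ?thesis by (simp add: G_def)
qed

lemma Ad_fun_rep:
  fixes Q :: "real^'n^'n"
  assumes oQ: "orthogonal_matrix Q"
  shows "Ad_fun k (Q ** diag_mat g ** transpose Q) X =
     Q ** (\<chi> i j. k ((g $ i - g $ j) / 2) * (transpose Q ** X ** Q) $ i $ j) ** transpose Q"
proof -
  define G where "G = Q ** diag_mat g ** transpose Q"
  obtain Q' g' where se: "sym_eig G = (Q', g')" by fastforce
  have oQ': "orthogonal_matrix Q'" and eq: "G = Q' ** diag_mat g' ** transpose Q'"
    using sym_eig_spec[OF oQ G_def] se by auto
  define R where "R = transpose Q' ** Q"
  have tw: "R $ i $ j \<noteq> 0 \<Longrightarrow> g' $ i = g $ j" for i j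
    using intertwine[OF oQ oQ'] eq G_def R_def by metis
  define Y where "Y = transpose Q ** X ** Q"
  define Z where "Z = (\<chi> i j. k ((g $ i - g $ j) / 2) * Y $ i $ j)"
  have X: "X = Q ** Y ** transpose Q"
    by (simp add: Y_def matrix_mul_assoc orth_QT[OF oQ]) (simp add: matrix_mul_assoc[symmetric] orth_QT[OF oQ])
  have Y': "transpose Q' ** X ** Q' = R ** Y ** transpose R"
    by (simp add: X R_def matrix_transpose_mul matrix_mul_assoc)
  have key: "(\<chi> i j. k ((g' $ i - g' $ j) / 2) * (R ** Y ** transpose R) $ i $ j) = R ** Z ** transpose R"
  proof -
    have "k ((g' $ i - g' $ j) / 2) * (R ** Y ** transpose R) $ i $ j = (R ** Z ** transpose R) $ i $ j" for i j
    proof -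
      have "k ((g' $ i - g' $ j) / 2) * (R ** Y ** transpose R) $ i $ j =
         (\<Sum>b\<in>UNIV. \<Sum>a\<in>UNIV. k ((g' $ i - g' $ j) / 2) * (R$i$a * Y$a$b * R$j$b))"
        by (simp add: mm_nth transpose_def sum_distrib_left sum_distrib_right)
      also have "\<dots> = (\<Sum>b\<in>UNIV. \<Sum>a\<in>UNIV. R$i$a * Z$a$b * R$j$b)"
      proof (intro sum.cong refl)
        fix a b
        show "k ((g' $ i - g' $ j) / 2) * (R$i$a * Y$a$b * R$j$b) = R$i$a * Z$a$b * R$j$b"
          using tw[of i a] tw[of j b] by (cases "R$i$a = 0 \<or> R$j$b = 0") (auto simp: Z_def)
      qed
      also have "\<dots> = (R ** Z ** transpose R) $ i $ j"
        by (simp add: mm_nth transpose_def sum_distrib_left sum_distrib_right)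
      finally show ?thesis .
    qed
    thus ?thesis by (simp add: vec_eq_iff)
  qed
  have "Ad_fun k G X = Q' ** (R ** Z ** transpose R) ** transpose Q'"
    by (simp add: Ad_fun_def se Let_def Y' key)
  also have "\<dots> = (Q' ** R) ** Z ** transpose (Q' ** R)"
    by (simp add: matrix_mul_assoc matrix_transpose_mul)
  also have "Q' ** R = Q" by (simp add: R_def matrix_mul_assoc orth_QT[OF oQ'])
  finally show ?thesis by (simp add: G_def Z_def Y_def)
qed


definition lam :: "real \<Rightarrow> real \<Rightarrow> real" where
  "lam x y = (if x = y then 1 / x else (ln x - ln y) / (x - y))"

lemma lam_sym: "lam x y = lam y x"
  by (simp add: lam_def) (simp add: divide_simps algebra_simps)

lemma lam_bounds_gt:
  assumes "0 < y" "y < x"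
  shows "1 / x \<le> lam x y \<and> lam x y \<le> 1 / y"
proof -
  have x0: "0 < x" using assms by simp
  have u: "ln x - ln y \<le> x / y - 1"
    using ln_le_minus_one[of "x / y"] assms x0 by (simp add: ln_div)
  have l: "1 - y / x \<le> ln x - ln y"
    using ln_le_minus_one[of "y / x"] assms x0 by (simp add: ln_div)
  have "lam x y = (ln x - ln y) / (x - y)" using assms by (simp add: lam_def)
  moreover have "(ln x - ln y) / (x - y) \<le> 1 / y"
    using u assms by (simp add: divide_simps)
  moreover have "1 / x \<le> (ln x - ln y) / (x - y)"
    using l assms x0 by (simp add: divide_simps)
  ultimately show ?thesis by simp
qed

lemma lam_bounds:
  assumes "0 < x" "0 < y"
  shows "min (1/x) (1/y) \<le> lam x y \<and> lam x y \<le> max (1/x) (1/y)"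
proof -
  consider "x = y" | "y < x" | "x < y" by linarith
  thus ?thesis
  proof cases
    case 1 thus ?thesis by (simp add: lam_def)
  next
    case 2 thus ?thesis using lam_bounds_gt[of y x] assms by auto
  next
    case 3 thus ?thesis using lam_bounds_gt[of x y] assms lam_sym[of x y] by auto
  qed
qed

lemma lam_pos_le:
  assumes "0 < m" "m \<le> x" "m \<le> y"
  shows "0 < lam x y \<and> lam x y \<le> 1 / m"
proof -
  have "0 < x" "0 < y" using assms by auto
  from lam_bounds[OF this] have "min (1/x) (1/y) \<le> lam x y" "lam x y \<le> max (1/x) (1/y)" by auto
  moreover have "1/x \<le> 1/m" "1/y \<le> 1/m" using assms by (auto simp: divide_simps)
  hence "max (1/x) (1/y) \<le> 1/m" by simp
  moreover have "0 < min (1/x) (1/y)" using \<open>0 < x\<close> \<open>0 < y\<close> by simp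
  ultimately show ?thesis by linarith
qed

lemma ln_lam: "ln x - ln y = lam x y * (x - y)"
  by (simp add: lam_def)

lemma lam_cont:
  assumes y0: "0 < y0" and c: "0 < c" and e: "0 < e"
  shows "\<exists>d>0. \<forall>y>0. \<bar>y - y0\<bar> < d \<longrightarrow> \<bar>lam y c - lam y0 c\<bar> < e"
proof (cases "y0 = c")
  case True
  have "continuous (at y0) (\<lambda>y. 1 / y)" using y0 by (intro continuous_intros) auto
  then obtain d where d: "d > 0" "\<And>y. dist y y0 < d \<Longrightarrow> dist (1/y) (1/y0) < e"
    using e unfolding continuous_at_eps_delta by blast
  show ?thesis
  proof (intro exI[of _ d] conjI allI impI)
    fix y :: real assume yp: "0 < y" and yd: "\<bar>y - y0\<bar> < d"
    have "lam y0 c = 1 / c" using True by (simp add: lam_def)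
    moreover have "min (1/y) (1/c) \<le> lam y c \<and> lam y c \<le> max (1/y) (1/c)" by (rule lam_bounds[OF yp c])
    moreover have "\<bar>1/y - 1/c\<bar> < e" using d(2)[of y] yd True by (simp add: dist_real_def)
    ultimately show "\<bar>lam y c - lam y0 c\<bar> < e" by (auto simp: min_def max_def split: if_splits)
  qed (rule d(1))
next
  case False
  have "continuous (at y0) (\<lambda>y. (ln y - ln c) / (y - c))" using y0 False
    by (intro continuous_intros) auto
  then obtain d where d: "d > 0" "\<And>y. dist y y0 < d \<Longrightarrow>
      dist ((ln y - ln c) / (y - c)) ((ln y0 - ln c) / (y0 - c)) < e"
    using e unfolding continuous_at_eps_delta by blast
  show ?thesis
  proof (intro exI[of _ "min d \<bar>y0 - c\<bar>"] conjI allI impI)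
    show "0 < min d \<bar>y0 - c\<bar>" using d(1) False by simp
    fix y :: real assume yp: "0 < y" and yd: "\<bar>y - y0\<bar> < min d \<bar>y0 - c\<bar>"
    hence "y \<noteq> c" by auto
    thus "\<bar>lam y c - lam y0 c\<bar> < e" using d(2)[of y] yd False by (simp add: lam_def dist_real_def)
  qed
qed


definition l1 :: "real^'n^'m \<Rightarrow> real" where
  "l1 M = (\<Sum>i\<in>UNIV. \<Sum>j\<in>UNIV. \<bar>M$i$j\<bar>)"

lemma norm_le_l1: "norm (M::real^'n^'m) \<le> l1 M"
proof -
  have "norm M \<le> (\<Sum>i\<in>UNIV. norm (M$i))" unfolding norm_vec_def by (rule L2_set_le_sum) simp
  also have "\<dots> \<le> (\<Sum>i\<in>UNIV. \<Sum>j\<in>UNIV. \<bar>M$i$j\<bar>)" by (intro sum_mono norm_le_l1_cart)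
  finally show ?thesis by (simp add: l1_def)
qed

lemma entry_le_norm: "\<bar>(M::real^'n^'m)$i$j\<bar> \<le> norm M"
proof -
  have "\<bar>M$i$j\<bar> \<le> norm (M$i)" by (rule component_le_norm_cart)
  also have "\<dots> \<le> norm M" by (rule Finite_Cartesian_Product.norm_nth_le)
  finally show ?thesis .
qed

lemma entry_le_l1: "\<bar>(M::real^'n^'m)$i$j\<bar> \<le> l1 M"
proof -
  have "\<bar>M$i$j\<bar> \<le> (\<Sum>j'\<in>UNIV. \<bar>M$i$j'\<bar>)" by (rule member_le_sum) auto
  also have "\<dots> \<le> (\<Sum>i'\<in>UNIV. \<Sum>j'\<in>UNIV. \<bar>M$i'$j'\<bar>)"
    by (rule member_le_sum[where f="\<lambda>i'. \<Sum>j'\<in>UNIV. \<bar>M$i'$j'\<bar>"]) (auto intro: sum_nonneg)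
  finally show ?thesis by (simp add: l1_def)
qed

lemma l1_le_norm: "l1 (M::real^'n^'m) \<le> real CARD('m) * real CARD('n) * norm M"
proof -
  have "l1 M \<le> (\<Sum>i\<in>(UNIV::'m set). \<Sum>j\<in>(UNIV::'n set). norm M)"
    unfolding l1_def by (intro sum_mono entry_le_norm)
  thus ?thesis by simp
qed

lemma l1_le_entries: "(\<And>i j. \<bar>(M::real^'n^'m)$i$j\<bar> \<le> c) \<Longrightarrow> l1 M \<le> real CARD('m) * real CARD('n) * c"
proof -
  assume h: "\<And>i j. \<bar>M$i$j\<bar> \<le> c"
  have "l1 M \<le> (\<Sum>i\<in>(UNIV::'m set). \<Sum>j\<in>(UNIV::'n set). c)"
    unfolding l1_def by (intro sum_mono h)
  thus ?thesis by simp
qed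

lemma orth_entry: assumes "orthogonal_matrix (Q::real^'n^'n)" shows "\<bar>Q$i$j\<bar> \<le> 1"
proof -
  have "(transpose Q ** Q)$j$j = 1" using assms by (simp add: orthogonal_matrix_def mat_def)
  hence s: "(\<Sum>k\<in>UNIV. (Q$k$j)^2) = 1" by (simp add: mm_nth transpose_def power2_eq_square)
  have "(Q$i$j)^2 \<le> (\<Sum>k\<in>UNIV. (Q$k$j)^2)" by (rule member_le_sum) auto
  hence "(Q$i$j)^2 \<le> 1^2" using s by simp
  thus ?thesis using abs_le_square_iff[of "Q$i$j" 1] by simp
qed

lemma sandwich_bound:
  fixes P :: "real^'m^'k" and M :: "real^'n^'m" and S :: "real^'l^'n"
  assumes "\<And>a. \<bar>P$i$a\<bar> \<le> 1" "\<And>b. \<bar>S$b$j\<bar> \<le> 1"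
  shows "\<bar>(P ** M ** S)$i$j\<bar> \<le> l1 M"
proof -
  have "\<bar>(P ** M ** S)$i$j\<bar> = \<bar>\<Sum>b\<in>UNIV. \<Sum>a\<in>UNIV. P$i$a * M$a$b * S$b$j\<bar>"
    by (simp add: mm_nth sum_distrib_right)
  also have "\<dots> \<le> (\<Sum>b\<in>UNIV. \<Sum>a\<in>UNIV. \<bar>P$i$a * M$a$b * S$b$j\<bar>)"
    by (rule order_trans[OF sum_abs sum_mono]) (rule sum_abs)
  also have "\<dots> \<le> (\<Sum>b\<in>UNIV. \<Sum>a\<in>UNIV. \<bar>M$a$b\<bar>)"
  proof (intro sum_mono)
    fix a b
    have "\<bar>P$i$a\<bar> * \<bar>S$b$j\<bar> \<le> 1 * 1" using assms by (intro mult_mono) auto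
    hence "\<bar>P$i$a\<bar> * \<bar>S$b$j\<bar> * \<bar>M$a$b\<bar> \<le> \<bar>M$a$b\<bar>" using mult_right_mono[of _ 1 "\<bar>M$a$b\<bar>"] by simp
    thus "\<bar>P$i$a * M$a$b * S$b$j\<bar> \<le> \<bar>M$a$b\<bar>" by (simp add: abs_mult mult_ac)
  qed
  also have "\<dots> = l1 M" unfolding l1_def by (rule sum.swap)
  finally show ?thesis .
qed

lemma orth_cancel1: "orthogonal_matrix (P::real^'n^'n) \<Longrightarrow> X ** P ** transpose P = X"
  by (simp add: matrix_mul_assoc[symmetric] orth_QT)
lemma orth_cancel2: "orthogonal_matrix (P::real^'n^'n) \<Longrightarrow> X ** transpose P ** P = X"
  by (simp add: matrix_mul_assoc[symmetric] orth_TQ)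

lemmas orth_simps = orth_TQ orth_QT orth_cancel1 orth_cancel2 matrix_mul_assoc

lemma spd_eig:
  fixes X :: "real^'n^'n"
  assumes spd: "sym_pos_def_mat X" and se: "sym_eig X = (P, x)"
  shows "orthogonal_matrix P \<and> X = P ** diag_mat x ** transpose P \<and> (\<forall>i. x$i > 0)"
proof -
  obtain Q0 g0 where "orthogonal_matrix Q0" "X = Q0 ** diag_mat g0 ** transpose Q0"
    using spectral[of X] spd by (auto simp: sym_pos_def_mat_def)
  from sym_eig_spec[OF this] se have oP: "orthogonal_matrix P" and Xe: "X = P ** diag_mat x ** transpose P"
    by auto
  have "x$i > 0" for i
  proof -
    define p where "p = (\<chi> k. P$k$i)"
    have d: "(transpose P ** X ** P) $ i $ i = x $ i"
      using Xe oP by (simp add: orth_simps) (simp add: mat_def diag_mat_def)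
    have "(transpose P ** X ** P) $ i $ i = p \<bullet> (X *v p)"
      by (simp add: mm_nth p_def transpose_def inner_vec_def matrix_vector_mult_def sum_distrib_left
          sum_distrib_right mult_ac) (subst sum.swap, simp add: mult_ac)
    moreover have "p \<noteq> 0"
    proof
      assume "p = 0"
      hence "(transpose P ** P) $ i $ i = 0"
        by (simp add: mm_nth transpose_def p_def vec_eq_iff)
      thus False using oP by (simp add: orthogonal_matrix_def mat_def)
    qed
    ultimately show ?thesis using d spd by (auto simp: sym_pos_def_mat_def)
  qed
  thus ?thesis using oP Xe by auto
qed


lemma mat_radd: "((A::real^'n^'m) + B) ** (C::real^'p^'n) = A ** C + B ** C"
  by (simp add: vec_eq_iff mm_nth distrib_right sum.distrib)
lemma mat_rdiff: "((A::real^'n^'m) - B) ** (C::real^'p^'n) = A ** C - B ** C"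
  by (simp add: vec_eq_iff mm_nth left_diff_distrib sum_subtractf)
lemma mat_ldiff: "(A::real^'n^'m) ** ((B::real^'p^'n) - C) = A ** B - A ** C"
  by (simp add: vec_eq_iff mm_nth right_diff_distrib sum_subtractf)
lemma mat_ladd: "(A::real^'n^'m) ** ((B::real^'p^'n) + C) = A ** B + A ** C"
  by (simp add: vec_eq_iff mm_nth distrib_left sum.distrib)
lemma mat_lscale: "(A::real^'n^'m) ** (c *\<^sub>R (B::real^'p^'n)) = c *\<^sub>R (A ** B)"
  by (simp add: vec_eq_iff mm_nth sum_distrib_left mult_ac)
lemma mat_rscale: "(c *\<^sub>R (A::real^'n^'m)) ** (B::real^'p^'n) = c *\<^sub>R (A ** B)"
  by (simp add: vec_eq_iff mm_nth sum_distrib_left mult_ac)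

lemmas mat_distribs = mat_radd mat_rdiff mat_ldiff mat_ladd mat_lscale mat_rscale

lemma orth_mul: "orthogonal_matrix (P::real^'n^'n) \<Longrightarrow> orthogonal_matrix Q \<Longrightarrow> orthogonal_matrix (transpose P ** Q)"
  by (simp add: orthogonal_matrix matrix_transpose_mul orth_simps)

definition Lop :: "real^'n^'n \<Rightarrow> real^'n \<Rightarrow> real^'n^'n \<Rightarrow> real^'n^'n" where
  "Lop Q a E = Q ** (\<chi> i j. lam (a$i) (a$j) * (transpose Q ** E ** Q)$i$j) ** transpose Q"

lemma Lop_linear:
  fixes Q :: "real^'n^'n"
  shows "linear (Lop Q a)"
proof (rule linearI)
  fix E F :: "real^'n^'n" and c :: real
  have "(\<chi> i j. lam (a$i) (a$j) * (transpose Q ** (E + F) ** Q)$i$j) =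
        (\<chi> i j. lam (a$i) (a$j) * (transpose Q ** E ** Q)$i$j) + (\<chi> i j. lam (a$i) (a$j) * (transpose Q ** F ** Q)$i$j)"
    by (simp add: vec_eq_iff mat_distribs algebra_simps)
  thus "Lop Q a (E + F) = Lop Q a E + Lop Q a F" by (simp add: Lop_def mat_distribs)
  have "(\<chi> i j. lam (a$i) (a$j) * (transpose Q ** (c *\<^sub>R E) ** Q)$i$j) =
        c *\<^sub>R (\<chi> i j. lam (a$i) (a$j) * (transpose Q ** E ** Q)$i$j)"
    by (simp add: vec_eq_iff mat_distribs algebra_simps)
  thus "Lop Q a (c *\<^sub>R E) = c *\<^sub>R Lop Q a E" by (simp add: Lop_def mat_distribs)
qed

lemma mat_log_rep: "sym_eig X = (P, x) \<Longrightarrow> mat_log X = P ** diag_mat (\<chi> i. ln (x$i)) ** transpose P"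
  by (simp add: mat_log_def mat_fun_def)

lemma log_deriv:
  fixes A :: "real^'n^'n"
  assumes spd: "sym_pos_def_mat A" and se: "sym_eig A = (Q, a)"
  shows "(mat_log has_derivative Lop Q a) (at A within {X. sym_pos_def_mat X})"
proof -
  from spd_eig[OF spd se] have oQ: "orthogonal_matrix Q" and Ae: "A = Q ** diag_mat a ** transpose Q"
    and apos: "\<And>i. a$i > 0" by auto
  have bl: "bounded_linear (Lop Q a)" using Lop_linear linear_conv_bounded_linear by blast
  define n where "n = real CARD('n)"
  have n1: "n \<ge> 1" unfolding n_def by (simp add: Suc_le_eq)
  define amin where "amin = Min (range (\<lambda>i. a$i))"
  have amin_pos: "amin > 0" unfolding amin_def using apos by simp
  have amin_le: "amin \<le> a$i" for i unfolding amin_def by simp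
  define m where "m = amin / 2"
  have m_pos: "m > 0" using amin_pos by (simp add: m_def)
  have am: "m \<le> a$i" for i using amin_le[of i] amin_pos by (simp add: m_def)
  show ?thesis unfolding has_derivative_within'
  proof (intro conjI allI impI bl)
    fix e :: real assume e: "e > 0"
    define \<eta> where "\<eta> = e / (2 * n^8)"
    have \<eta>_pos: "\<eta> > 0" using e n1 by (simp add: \<eta>_def)
    have "\<forall>k b. \<exists>d>0. \<forall>y>0. \<bar>y - a$k\<bar> < d \<longrightarrow> \<bar>lam y (a$b) - lam (a$k) (a$b)\<bar> < \<eta>"
      using lam_cont apos \<eta>_pos by blast
    then obtain dl where dl: "\<And>k b. dl k b > 0"
      "\<And>k b y. y > 0 \<Longrightarrow> \<bar>y - a$k\<bar> < dl k b \<Longrightarrow> \<bar>lam y (a$b) - lam (a$k) (a$b)\<bar> < \<eta>"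
      by metis
    define \<delta>0 where "\<delta>0 = Min (range (\<lambda>kb. dl (fst kb) (snd kb)))"
    have \<delta>0_pos: "\<delta>0 > 0" unfolding \<delta>0_def using dl(1) by simp
    have \<delta>0_le: "\<delta>0 \<le> dl k b" for k b unfolding \<delta>0_def
      by (rule Min_le) (auto intro: image_eqI[where x="(k,b)"])
    define d where "d = min (m / n^2) (\<eta> * \<delta>0 * m / (2 * n^2))"
    have d_pos: "d > 0" unfolding d_def using m_pos \<eta>_pos \<delta>0_pos n1 by simp
    show "\<exists>d>0. \<forall>X\<in>{X. sym_pos_def_mat X}. 0 < norm (X - A) \<and> norm (X - A) < d \<longrightarrow>
        norm (mat_log X - mat_log A - Lop Q a (X - A)) / norm (X - A) < e"
    proof (intro exI[of _ d] conjI ballI impI d_pos)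
      fix X assume "X \<in> {X. sym_pos_def_mat X}" and nE: "0 < norm (X - A) \<and> norm (X - A) < d"
      hence spdX: "sym_pos_def_mat X" by simp
      obtain P x where seX: "sym_eig X = (P, x)" by fastforce
      from spd_eig[OF spdX seX] have oP: "orthogonal_matrix P" and Xe: "X = P ** diag_mat x ** transpose P"
        and xpos: "\<And>i. x$i > 0" by auto
      define E where "E = X - A"
      define R where "R = transpose P ** Q"
      define Y where "Y = transpose Q ** E ** Q"
      have oR: "orthogonal_matrix R" unfolding R_def by (rule orth_mul[OF oP oQ])
      have Rle: "\<bar>R$i$k\<bar> \<le> 1" for i k by (rule orth_entry[OF oR])
      have nE0: "0 < norm E" and nEd: "norm E < d" using nE by (auto simp: E_def)
      have n2E: "n^2 * norm E \<le> n^2 * d" using nEd n1 by simp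
      have l1E: "l1 E \<le> n^2 * norm E" using l1_le_norm[of E] by (simp add: n_def power2_eq_square)
      have sw: "\<bar>(transpose M ** F ** N)$i$j\<bar> \<le> l1 F" if "orthogonal_matrix M" "orthogonal_matrix N"
        for M N F :: "real^'n^'n" and i j
        by (rule sandwich_bound) (auto simp: transpose_def orth_entry that)
      have sw2: "\<bar>(M ** F ** transpose N)$i$j\<bar> \<le> l1 F" if "orthogonal_matrix M" "orthogonal_matrix N"
        for M N F :: "real^'n^'n" and i j
        by (rule sandwich_bound) (auto simp: transpose_def orth_entry that)
      have PEQ: "transpose P ** E ** Q = diag_mat x ** R - R ** diag_mat a"
        by (simp add: E_def mat_distribs Xe Ae R_def orth_simps oP oQ)
      have F1: "R$i$k * (x$i - a$k) = (transpose P ** E ** Q)$i$k" for i k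
        by (simp add: PEQ mul_diag diag_mul algebra_simps)
      have F2: "\<bar>(transpose P ** E ** Q)$i$k\<bar> \<le> n^2 * norm E" for i k
        using sw[OF oP oQ, of E i k] l1E by linarith
      have F3: "m \<le> x$i" for i
      proof -
        have e1: "(transpose P ** X ** P)$i$i = x$i"
          by (simp add: Xe orth_simps oP) (simp add: diag_mat_def)
        have e2: "transpose P ** A ** P = R ** diag_mat a ** transpose R"
          by (simp add: Ae R_def matrix_transpose_mul matrix_mul_assoc)
        have "(R ** diag_mat a ** transpose R)$i$i = (\<Sum>k\<in>UNIV. (R$i$k)^2 * a$k)"
          by (simp only: mm_nth[of "R ** diag_mat a"] mul_diag) (simp add: transpose_def power2_eq_square mult_ac)
        also have "\<dots> \<ge> (\<Sum>k\<in>UNIV. (R$i$k)^2 * amin)"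
          by (intro sum_mono mult_left_mono amin_le) simp
        moreover have "(\<Sum>k\<in>UNIV. (R$i$k)^2 * amin) = amin * (R ** transpose R)$i$i"
          by (simp add: mm_nth transpose_def power2_eq_square sum_distrib_left mult_ac)
        moreover have "(R ** transpose R)$i$i = 1" using oR by (simp add: orthogonal_matrix_def mat_def)
        ultimately have e3: "(transpose P ** A ** P)$i$i \<ge> amin" using e2 by simp
        have e4: "transpose P ** X ** P = transpose P ** A ** P + transpose P ** E ** P"
          by (simp add: E_def mat_distribs)
        have "\<bar>(transpose P ** E ** P)$i$i\<bar> \<le> n^2 * norm E" using sw[OF oP oP, of E i i] l1E by linarith
        moreover have "n^2 * d \<le> m" using n1 by (simp add: d_def min_def divide_simps)
        ultimately show ?thesis using e1 e3 e4 n2E by (simp add: m_def)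
      qed
      have F4: "\<bar>R$i$k\<bar> * \<bar>lam (x$i) (a$b) - lam (a$k) (a$b)\<bar> \<le> \<eta>" for i k b
      proof (cases "\<bar>x$i - a$k\<bar> < \<delta>0")
        case True
        hence "\<bar>lam (x$i) (a$b) - lam (a$k) (a$b)\<bar> < \<eta>"
          using dl(2)[OF xpos, of i k b] \<delta>0_le[of k b] by linarith
        thus ?thesis using Rle[of i k] mult_mono[of "\<bar>R$i$k\<bar>" 1 "\<bar>lam (x$i) (a$b) - lam (a$k) (a$b)\<bar>" \<eta>]
          by simp
      next
        case False
        have h1: "\<bar>R$i$k\<bar> * \<delta>0 \<le> n^2 * norm E"
        proof -
          have "\<bar>R$i$k\<bar> * \<delta>0 \<le> \<bar>R$i$k\<bar> * \<bar>x$i - a$k\<bar>" using False by (intro mult_left_mono) auto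
          also have "\<dots> = \<bar>(transpose P ** E ** Q)$i$k\<bar>" unfolding F1[of i k, symmetric] by (simp add: abs_mult)
          finally show ?thesis using F2[of i k] by linarith
        qed
        have h3: "n^2 * norm E \<le> \<eta> * \<delta>0 * m / 2"
        proof -
          have "n^2 * d \<le> \<eta> * \<delta>0 * m / 2" using n1 by (simp add: d_def min_def divide_simps)
          thus ?thesis using n2E by linarith
        qed
        have hR: "\<bar>R$i$k\<bar> \<le> \<eta> * m / 2"
        proof -
          have "\<bar>R$i$k\<bar> * \<delta>0 \<le> (\<eta> * m / 2) * \<delta>0" using h1 h3 by (simp add: mult_ac)
          thus ?thesis using \<delta>0_pos by simp
        qed
        have l1: "0 < lam (x$i) (a$b) \<and> lam (x$i) (a$b) \<le> 1/m" by (rule lam_pos_le[OF m_pos F3 am])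
        have l2: "0 < lam (a$k) (a$b) \<and> lam (a$k) (a$b) \<le> 1/m" by (rule lam_pos_le[OF m_pos am am])
        have h2: "\<bar>lam (x$i) (a$b) - lam (a$k) (a$b)\<bar> \<le> 2 / m" using l1 l2 by (simp add: abs_if)
        have "\<bar>R$i$k\<bar> * \<bar>lam (x$i) (a$b) - lam (a$k) (a$b)\<bar> \<le> (\<eta> * m / 2) * (2 / m)"
          by (rule mult_mono[OF hR h2]) (use \<eta>_pos m_pos in auto)
        also have "\<dots> = \<eta>" using m_pos by simp
        finally show ?thesis .
      qed
      define r where "r = mat_log X - mat_log A - Lop Q a E"
      define N where "N = transpose P ** r ** Q"
      have lX: "transpose P ** mat_log X ** Q = diag_mat (\<chi> i. ln (x$i)) ** R"
        by (simp add: mat_log_rep[OF seX] orth_simps oP R_def)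
      have lA: "transpose P ** mat_log A ** Q = R ** diag_mat (\<chi> i. ln (a$i))"
        by (simp add: mat_log_rep[OF se] orth_simps oQ R_def)
      have lL: "transpose P ** Lop Q a E ** Q = R ** (\<chi> i j. lam (a$i) (a$j) * Y$i$j)"
        by (simp add: Lop_def orth_simps oQ R_def Y_def)
      have RY: "transpose P ** E ** Q = R ** Y"
        by (simp add: R_def Y_def orth_simps oQ)
      have F5: "N$i$j = (\<Sum>k\<in>UNIV. R$i$k * Y$k$j * (lam (x$i) (a$j) - lam (a$k) (a$j)))" for i j
      proof -
        have "N$i$j = ln (x$i) * R$i$j - R$i$j * ln (a$j) - (\<Sum>k\<in>UNIV. R$i$k * (lam (a$k) (a$j) * Y$k$j))"
        proof -
          have Neq: "N = diag_mat (\<chi> i. ln (x$i)) ** R - R ** diag_mat (\<chi> i. ln (a$i))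
              - R ** (\<chi> i j. lam (a$i) (a$j) * Y$i$j)"
            by (simp add: N_def r_def mat_distribs lX lA lL)
          show ?thesis by (simp add: Neq mul_diag diag_mul, simp add: mm_nth)
        qed
        also have "ln (x$i) * R$i$j - R$i$j * ln (a$j) = lam (x$i) (a$j) * (R$i$j * (x$i - a$j))"
        proof -
          have "ln (x$i) * R$i$j - R$i$j * ln (a$j) = R$i$j * (ln (x$i) - ln (a$j))" by (simp add: algebra_simps)
          also have "\<dots> = R$i$j * (lam (x$i) (a$j) * (x$i - a$j))" by (simp only: ln_lam)
          finally show ?thesis by (simp add: mult_ac)
        qed
        also have "R$i$j * (x$i - a$j) = (\<Sum>k\<in>UNIV. R$i$k * Y$k$j)"
          using F1[of i j] RY by (simp add: mm_nth)
        finally show ?thesis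
          by (simp add: sum_distrib_left sum_subtractf[symmetric] algebra_simps)
      qed
      have F6: "\<bar>N$i$j\<bar> \<le> n * (\<eta> * l1 E)" for i j
      proof -
        have "\<bar>N$i$j\<bar> \<le> (\<Sum>k\<in>UNIV. \<bar>R$i$k * Y$k$j * (lam (x$i) (a$j) - lam (a$k) (a$j))\<bar>)"
          unfolding F5 by (rule sum_abs)
        also have "\<dots> \<le> (\<Sum>k\<in>(UNIV::'n set). \<eta> * l1 E)"
        proof (rule sum_mono)
          fix k
          have "\<bar>Y$k$j\<bar> \<le> l1 E" unfolding Y_def by (rule sw[OF oQ oQ])
          hence "(\<bar>R$i$k\<bar> * \<bar>lam (x$i) (a$j) - lam (a$k) (a$j)\<bar>) * \<bar>Y$k$j\<bar> \<le> \<eta> * l1 E"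
            using F4[of i k j] \<eta>_pos by (intro mult_mono) auto
          thus "\<bar>R$i$k * Y$k$j * (lam (x$i) (a$j) - lam (a$k) (a$j))\<bar> \<le> \<eta> * l1 E"
            by (simp add: abs_mult mult_ac)
        qed
        finally show ?thesis by (simp add: n_def)
      qed
      have rN: "r = P ** N ** transpose Q"
        by (simp add: N_def orth_simps oP oQ)
      have "norm r \<le> l1 r" by (rule norm_le_l1)
      also have "\<dots> \<le> n * n * l1 N"
        using l1_le_entries[of r "l1 N"] sw2[OF oP oQ, of N] rN by (simp add: n_def)
      also have "l1 N \<le> n * n * (n * (\<eta> * l1 E))"
        using l1_le_entries[of N] F6 by (simp add: n_def)
      also have "l1 E \<le> n^2 * norm E" by (rule l1E)
      finally have "norm r \<le> n * n * (n * n * (n * (\<eta> * (n^2 * norm E))))"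
        using n1 \<eta>_pos by (simp add: mult_left_mono)
      also have "\<dots> = n^7 * \<eta> * norm E" by (simp add: power_def eval_nat_numeral algebra_simps)
      also have "\<dots> \<le> n^8 * \<eta> * norm E"
        using n1 \<eta>_pos nE0 by (intro mult_right_mono) (auto simp: power_increasing)
      also have "\<dots> = e / 2 * norm E" using n1 by (simp add: \<eta>_def)
      finally have "norm r \<le> e / 2 * norm E" .
      hence "norm r / norm E \<le> e / 2" using nE0 by (simp add: divide_simps)
      thus "norm (mat_log X - mat_log A - Lop Q a (X - A)) / norm (X - A) < e"
        using e unfolding r_def E_def by linarith
    qed
  qed
qed


lemma Lfun_odd: "Lfun (- x) = - Lfun x"
  by (simp add: Lfun_def)

lemma hyp_id:
  fixes h1 h2 :: real
  shows "(exp (2*h1) - exp (2*h2)) * cosh (h1 - h2) = (exp (2*h1) + exp (2*h2)) * sinh (h1 - h2)"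
proof -
  define u where "u = exp h1"
  define w where "w = exp h2"
  have u0: "u > 0" and w0: "w > 0" by (simp_all add: u_def w_def)
  have e1: "exp (2*h1) = u^2" by (simp add: u_def exp_double[symmetric] power2_eq_square exp_add[symmetric])
  have e2: "exp (2*h2) = w^2" by (simp add: w_def power2_eq_square exp_add[symmetric])
  have c: "cosh (h1 - h2) = (u/w + w/u) / 2"
    by (simp add: cosh_def u_def w_def exp_diff exp_minus field_simps)
  have s: "sinh (h1 - h2) = (u/w - w/u) / 2"
    by (simp add: sinh_def u_def w_def exp_diff exp_minus field_simps)
  show ?thesis unfolding e1 e2 c s using u0 w0
    by (simp add: field_simps power2_eq_square)
qed

lemma scal_core:
  fixes b1 b2 X g g' :: real
  assumes b1: "b1 > 0" and b2: "b2 > 0"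
  defines "h1 \<equiv> ln b1 / 2" and "h2 \<equiv> ln b2 / 2"
  shows "(2 / lam b1 b2) * ((1/2) * (lam b1 b2 * X)
           + (h1 - h2) * ((g - g') / 2 - Lfun (2 * ((h1 - h2) / 2)) * ((g + g') / 2)) - (g + g') / 2)
         = X - (g * b2 + b1 * g')"
proof (cases "b1 = b2")
  case True
  have l: "lam b1 b2 = 1 / b1" using True by (simp add: lam_def)
  show ?thesis unfolding l using True b1 by (simp add: h1_def h2_def field_simps)
next
  case False
  define d where "d = h1 - h2"
  have bb1: "b1 = exp (2*h1)" using b1 by (simp add: h1_def)
  have bb2: "b2 = exp (2*h2)" using b2 by (simp add: h2_def)
  have d0: "d \<noteq> 0" using False bb1 bb2 by (auto simp: d_def)
  have sd: "sinh d \<noteq> 0" using d0 by simp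
  have lamv: "lam b1 b2 = 2 * d / (b1 - b2)" using False by (simp add: lam_def d_def h1_def h2_def field_simps)
  have hy: "(b1 - b2) * cosh d = (b1 + b2) * sinh d" using hyp_id[of h1 h2] bb1 bb2 by (simp add: d_def)
  have Lv: "Lfun (2 * ((h1 - h2) / 2)) = cosh d / sinh d - 1 / d"
  proof -
    have "2 * ((h1 - h2) / 2) = d" by (simp add: d_def)
    thus ?thesis using d0 by (simp add: Lfun_def)
  qed
  have bd: "b1 - b2 \<noteq> 0" using False by simp
  have "(2 / lam b1 b2) * ((1/2) * (lam b1 b2 * X)
           + (h1 - h2) * ((g - g') / 2 - Lfun (2 * ((h1 - h2) / 2)) * ((g + g') / 2)) - (g + g') / 2)
        = X + (b1 - b2) * ((g - g') / 2) - ((b1 - b2) * cosh d / sinh d) * ((g + g') / 2)"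
    unfolding lamv Lv d_def[symmetric] using d0 sd bd by (simp add: Lfun_def field_simps)
  also have "(b1 - b2) * cosh d / sinh d = b1 + b2" using hy sd by (simp add: field_simps)
  also have "X + (b1 - b2) * ((g - g') / 2) - (b1 + b2) * ((g + g') / 2) = X - (g * b2 + b1 * g')"
    by (simp add: field_simps)
  finally show ?thesis .
qed

lemma lam_pos: "0 < b1 \<Longrightarrow> 0 < b2 \<Longrightarrow> lam b1 b2 > 0"
  using lam_pos_le[of "min b1 b2" b1 b2] by simp



definition cj :: "real^'n^'n \<Rightarrow> real^'n^'n \<Rightarrow> real^'n^'n" where
  "cj Q M = transpose Q ** M ** Q"

context fixes Q :: "real^'n^'n" assumes oQ: "orthogonal_matrix Q"
begin
lemma cj_add: "cj Q (M + N) = cj Q M + cj Q N" by (simp add: cj_def mat_distribs)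
lemma cj_diff: "cj Q (M - N) = cj Q M - cj Q N" by (simp add: cj_def mat_distribs)
lemma cj_scale: "cj Q (c *\<^sub>R M) = c *\<^sub>R cj Q M" by (simp add: cj_def mat_distribs)
lemma cj_minus: "cj Q (- M) = - cj Q M" using cj_scale[of "-1" M] by simp
lemma cj_mat1: "cj Q (mat 1) = mat 1" by (simp add: cj_def oQ orth_TQ)
lemma cj_zero: "cj Q 0 = 0" by (simp add: cj_def)
lemma cj_mul: "cj Q (M ** N) = cj Q M ** cj Q N" by (simp add: cj_def orth_simps oQ)
lemma cj_transpose: "cj Q (transpose M) = transpose (cj Q M)"
  by (simp add: cj_def matrix_transpose_mul matrix_mul_assoc)
lemma cj_rep: "cj Q (Q ** K ** transpose Q) = K" by (simp add: cj_def orth_simps oQ)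
lemma cj_inj: "cj Q M = cj Q N \<longleftrightarrow> M = N"
proof
  assume "cj Q M = cj Q N"
  hence "Q ** cj Q M ** transpose Q = Q ** cj Q N ** transpose Q" by simp
  thus "M = N" by (simp add: cj_def orth_simps oQ)
qed simp
end

lemmas cj_simps = cj_add cj_diff cj_scale cj_minus cj_mat1 cj_zero cj_mul cj_transpose cj_rep

lemma diag_scale: "diag_mat (c *\<^sub>R g) = c *\<^sub>R diag_mat g"
  by (simp add: vec_eq_iff diag_mat_def)

lemma scale_conj: "c *\<^sub>R (Q ** diag_mat g ** transpose Q) = Q ** diag_mat (c *\<^sub>R g) ** transpose Q"
  by (simp add: mat_distribs diag_scale)

lemma diag_nth: "diag_mat g $ i $ j = (if i = j then g $ i else 0)"
  by (simp add: diag_mat_def)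

lemma mat1_nth: "(mat 1 :: real^'n^'n) $ i $ j = (if i = j then 1 else 0)"
  by (simp add: mat_def)

lemma tr_nth: "transpose (M::real^'n^'m) $ i $ j = M $ j $ i" by (simp add: transpose_def)

lemma Lfun_swap: "Lfun (2 * ((y - x) / 2)) = - Lfun (2 * ((x - y) / 2))"
proof -
  have a: "2 * ((y - x) / 2) = - (x - y)" by simp
  have b: "2 * ((x - y) / 2) = x - y" by simp
  show ?thesis unfolding a b by (rule Lfun_odd)
qed

lemma anti_lin: "(g' - g)/2 + L * ((g' + g)/2) = - ((g - g')/2 - L * ((g + g')/2 :: real))"
  by (simp add: field_simps)

lemma pointwise:
  fixes A Bd G :: "real^'n^'n" and \<tau> :: real
  assumes spd: "sym_pos_def_mat A" and se: "sym_eig A = (Q, b)" and tau: "\<tau> > 0"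
  defines "H \<equiv> (1/2) *\<^sub>R mat_log A"
    and "D \<equiv> (1/2) *\<^sub>R (G + transpose G)"
    and "Om \<equiv> (1/2) *\<^sub>R (G - transpose G)
             - Ad_fun (\<lambda>x. Lfun (2 * x)) ((1/2) *\<^sub>R mat_log A) ((1/2) *\<^sub>R (G + transpose G))"
    and "Hd \<equiv> (1/2) *\<^sub>R Lop Q b Bd"
  shows "(Bd + (1/\<tau>) *\<^sub>R (A - mat 1) = G ** A + A ** transpose G \<longleftrightarrow>
          Hd + 2 *\<^sub>R Ad H Om + (1/(2*\<tau>)) *\<^sub>R (mat 1 - mat_exp (- 2 *\<^sub>R H)) = D)
       \<and> transpose Om = - Om
       \<and> (Hd + 2 *\<^sub>R Ad H Om + (1/\<tau>) *\<^sub>R H = D \<longleftrightarrow>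
          Bd - G ** A - A ** transpose G + (1/\<tau>) *\<^sub>R (A ** mat_log A) = 0)"
proof -
  from spd_eig[OF spd se] have oQ: "orthogonal_matrix Q" and Ae: "A = Q ** diag_mat b ** transpose Q"
    and bpos: "\<And>i. b$i > 0" by auto
  define h :: "real^'n" where "h = (\<chi> i. ln (b$i) / 2)"
  have logA: "mat_log A = Q ** diag_mat (\<chi> i. ln (b$i)) ** transpose Q" by (rule mat_log_rep[OF se])
  have hv: "(1/2) *\<^sub>R (\<chi> i. ln (b$i)) = h" by (simp add: h_def vec_eq_iff)
  have Hrep: "H = Q ** diag_mat h ** transpose Q"
    unfolding H_def logA scale_conj hv ..
  have Hrep': "(1/2) *\<^sub>R mat_log A = Q ** diag_mat h ** transpose Q" using Hrep H_def by simp
  have expH: "mat_exp (- 2 *\<^sub>R H) = Q ** diag_mat (\<chi> i. 1 / b$i) ** transpose Q"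
  proof -
    have "- 2 *\<^sub>R H = Q ** diag_mat ((-2) *\<^sub>R h) ** transpose Q"
      unfolding Hrep scale_conj[symmetric] by simp
    hence "mat_exp (- 2 *\<^sub>R H) = Q ** diag_mat (\<chi> i. exp (((-2) *\<^sub>R h)$i)) ** transpose Q"
      by (simp add: mat_exp_def mat_fun_rep[OF oQ])
    also have "(\<chi> i. exp (((-2) *\<^sub>R h)$i)) = (\<chi> i. 1 / b$i)"
      using bpos by (simp add: vec_eq_iff h_def exp_minus inverse_eq_divide)
    finally show ?thesis .
  qed
  define Gt where "Gt = cj Q G"
  define Bt where "Bt = cj Q Bd"
  define Dt where "Dt = (1/2) *\<^sub>R (Gt + transpose Gt)"
  define Ot where "Ot = (1/2) *\<^sub>R (Gt - transpose Gt) - (\<chi> i j. Lfun (2 * ((h$i - h$j) / 2)) * Dt$i$j)"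
  have cjD: "cj Q D = Dt" by (simp add: D_def Dt_def Gt_def cj_simps oQ)
  have cjD': "cj Q ((1/2) *\<^sub>R (G + transpose G)) = Dt" using cjD by (simp add: D_def)
  have AdR: "Ad_fun (\<lambda>x. Lfun (2 * x)) ((1/2) *\<^sub>R mat_log A) ((1/2) *\<^sub>R (G + transpose G))
      = Q ** (\<chi> i j. Lfun (2 * ((h$i - h$j) / 2)) * Dt$i$j) ** transpose Q"
  proof -
    have "Ad_fun (\<lambda>x. Lfun (2 * x)) ((1/2) *\<^sub>R mat_log A) ((1/2) *\<^sub>R (G + transpose G))
      = Q ** (\<chi> i j. Lfun (2 * ((h$i - h$j) / 2)) * (transpose Q ** ((1/2) *\<^sub>R (G + transpose G)) ** Q)$i$j) ** transpose Q"
      unfolding Hrep' by (rule Ad_fun_rep[OF oQ])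
    also have "transpose Q ** ((1/2) *\<^sub>R (G + transpose G)) ** Q = Dt" using cjD' by (simp add: cj_def)
    finally show ?thesis .
  qed
  have cjOm: "cj Q Om = Ot"
    unfolding Om_def AdR cj_diff[OF oQ] cj_rep[OF oQ]
    by (simp add: cj_scale[OF oQ] cj_diff[OF oQ] cj_transpose[OF oQ] Ot_def Gt_def)
  have cjH: "cj Q H = diag_mat h" by (simp add: Hrep cj_rep[OF oQ])
  have cjHd: "cj Q Hd = (1/2) *\<^sub>R (\<chi> i j. lam (b$i) (b$j) * Bt$i$j)"
  proof -
    have "cj Q Hd = (1/2) *\<^sub>R (\<chi> i j. lam (b$i) (b$j) * (transpose Q ** Bd ** Q)$i$j)"
      unfolding Hd_def Lop_def cj_scale[OF oQ] cj_rep[OF oQ] ..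
    thus ?thesis by (simp add: Bt_def cj_def)
  qed
  have cjA: "cj Q A = diag_mat b" by (simp add: Ae cj_rep[OF oQ])
  have cjE: "cj Q (mat_exp (- 2 *\<^sub>R H)) = diag_mat (\<chi> i. 1 / b$i)" unfolding expH by (rule cj_rep[OF oQ])
  have cjL: "cj Q (mat_log A) = diag_mat (\<chi> i. ln (b$i))" by (simp add: logA cj_rep[OF oQ])
  have cjAd: "cj Q (Ad H Om) = (1/2) *\<^sub>R (diag_mat h ** Ot - Ot ** diag_mat h)"
    by (simp add: Ad_def cj_simps oQ cjH cjOm)
  have Ot_nth: "Ot$i$j = (Gt$i$j - Gt$j$i)/2 - Lfun (2 * ((h$i - h$j) / 2)) * ((Gt$i$j + Gt$j$i)/2)" for i j
    by (simp add: Ot_def Dt_def transpose_def)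
  have lam_nz: "lam (b$i) (b$j) \<noteq> 0" for i j using lam_pos[OF bpos bpos, of i j] by simp
  have core: "(2 / lam (b$i) (b$j)) * ((1/2) * (lam (b$i) (b$j) * Bt$i$j) + (h$i - h$j) * Ot$i$j
      - (Gt$i$j + Gt$j$i)/2) = Bt$i$j - (Gt$i$j * b$j + b$i * Gt$j$i)" for i j
    unfolding Ot_nth using scal_core[OF bpos bpos, of i j "Bt$i$j" "Gt$i$j" "Gt$j$i"] by (simp add: h_def)
  have bnz: "b$i \<noteq> 0" for i using bpos[of i] by simp
  have lamii: "lam (b$i) (b$i) = 1 / b$i" for i by (simp add: lam_def)
  have e1: "(Bd + (1/\<tau>) *\<^sub>R (A - mat 1) = G ** A + A ** transpose G) \<longleftrightarrow>
      (\<forall>i j. Bt$i$j + (1/\<tau>) * (if i = j then b$i - 1 else 0) - (Gt$i$j * b$j + b$i * Gt$j$i) = 0)"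
  proof -
    have "(Bd + (1/\<tau>) *\<^sub>R (A - mat 1) = G ** A + A ** transpose G) \<longleftrightarrow>
        cj Q (Bd + (1/\<tau>) *\<^sub>R (A - mat 1)) - cj Q (G ** A + A ** transpose G) = 0"
      using cj_inj[OF oQ] by simp
    also have "cj Q (Bd + (1/\<tau>) *\<^sub>R (A - mat 1)) - cj Q (G ** A + A ** transpose G) =
        (\<chi> i j. Bt$i$j + (1/\<tau>) * (if i = j then b$i - 1 else 0) - (Gt$i$j * b$j + b$i * Gt$j$i))"
      by (simp add: cj_simps oQ cjA Bt_def[symmetric] Gt_def[symmetric] vec_eq_iff mul_diag diag_mul
          diag_nth mat1_nth tr_nth)
    finally show ?thesis by (simp add: vec_eq_iff)
  qed
  have h1: "(Hd + 2 *\<^sub>R Ad H Om + (1/(2*\<tau>)) *\<^sub>R (mat 1 - mat_exp (- 2 *\<^sub>R H)) = D) \<longleftrightarrow>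
      (\<forall>i j. ((1/2) * (lam (b$i) (b$j) * Bt$i$j) + (h$i - h$j) * Ot$i$j - (Gt$i$j + Gt$j$i)/2)
         + (1/(2*\<tau>)) * (if i = j then 1 - 1 / b$i else 0) = 0)"
  proof -
    have "(Hd + 2 *\<^sub>R Ad H Om + (1/(2*\<tau>)) *\<^sub>R (mat 1 - mat_exp (- 2 *\<^sub>R H)) = D) \<longleftrightarrow>
        cj Q (Hd + 2 *\<^sub>R Ad H Om + (1/(2*\<tau>)) *\<^sub>R (mat 1 - mat_exp (- 2 *\<^sub>R H))) - cj Q D = 0"
      using cj_inj[OF oQ] by simp
    also have "cj Q (Hd + 2 *\<^sub>R Ad H Om + (1/(2*\<tau>)) *\<^sub>R (mat 1 - mat_exp (- 2 *\<^sub>R H))) - cj Q D =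
        (\<chi> i j. ((1/2) * (lam (b$i) (b$j) * Bt$i$j) + (h$i - h$j) * Ot$i$j - (Gt$i$j + Gt$j$i)/2)
         + (1/(2*\<tau>)) * (if i = j then 1 - 1 / b$i else 0))"
      unfolding cj_add[OF oQ] cj_scale[OF oQ] cj_diff[OF oQ] cjHd cjAd cjE cjD cj_mat1[OF oQ]
      using bnz tau by (simp add: vec_eq_iff mul_diag diag_mul diag_nth mat1_nth Dt_def tr_nth algebra_simps,
        simp add: field_simps)
    finally show ?thesis by (simp add: vec_eq_iff)
  qed
  have eq1: "(Bd + (1/\<tau>) *\<^sub>R (A - mat 1) = G ** A + A ** transpose G) \<longleftrightarrow>
          (Hd + 2 *\<^sub>R Ad H Om + (1/(2*\<tau>)) *\<^sub>R (mat 1 - mat_exp (- 2 *\<^sub>R H)) = D)"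
    unfolding e1 h1
  proof (intro iff_allI)
    fix i j
    define Y where "Y = (1/2) * (lam (b$i) (b$j) * Bt$i$j) + (h$i - h$j) * Ot$i$j - (Gt$i$j + Gt$j$i)/2"
    have k: "(2 / lam (b$i) (b$j)) * (Y + (1/(2*\<tau>)) * (if i = j then 1 - 1 / b$i else 0)) =
        Bt$i$j + (1/\<tau>) * (if i = j then b$i - 1 else 0) - (Gt$i$j * b$j + b$i * Gt$j$i)"
    proof (cases "i = j")
      case True
      have "(2 / lam (b$i) (b$j)) * Y = Bt$i$j - (Gt$i$j * b$j + b$i * Gt$j$i)" using core[of i j] by (simp add: Y_def)
      moreover have "(2 / lam (b$i) (b$j)) * ((1/(2*\<tau>)) * (1 - 1 / b$i)) = (1/\<tau>) * (b$i - 1)"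
      proof -
        have l: "lam (b$i) (b$j) = 1 / b$i" using True lamii[of i] by simp
        show ?thesis unfolding l using bpos[of i] tau by (simp add: field_simps)
      qed
      ultimately show ?thesis using True by (simp add: distrib_left)
    next
      case False
      thus ?thesis using core[of i j] by (simp add: Y_def)
    qed
    have nz: "2 / lam (b$i) (b$j) \<noteq> 0" using lam_nz[of i j] by simp
    show "(Bt$i$j + (1/\<tau>) * (if i = j then b$i - 1 else 0) - (Gt$i$j * b$j + b$i * Gt$j$i) = 0) \<longleftrightarrow>
        (Y + (1/(2*\<tau>)) * (if i = j then 1 - 1 / b$i else 0) = 0)"
      unfolding k[symmetric] mult_eq_0_iff using nz by blast
  qed
  have e2: "(Bd - G ** A - A ** transpose G + (1/\<tau>) *\<^sub>R (A ** mat_log A) = 0) \<longleftrightarrow>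
      (\<forall>i j. Bt$i$j - (Gt$i$j * b$j + b$i * Gt$j$i) + (1/\<tau>) * (if i = j then b$i * ln (b$i) else 0) = 0)"
  proof -
    have "(Bd - G ** A - A ** transpose G + (1/\<tau>) *\<^sub>R (A ** mat_log A) = 0) \<longleftrightarrow>
        cj Q (Bd - G ** A - A ** transpose G + (1/\<tau>) *\<^sub>R (A ** mat_log A)) = 0"
      using cj_inj[OF oQ, of _ 0] cj_zero[OF oQ] by simp
    also have "cj Q (Bd - G ** A - A ** transpose G + (1/\<tau>) *\<^sub>R (A ** mat_log A)) =
        (\<chi> i j. Bt$i$j - (Gt$i$j * b$j + b$i * Gt$j$i) + (1/\<tau>) * (if i = j then b$i * ln (b$i) else 0))"
      by (simp add: cj_simps oQ cjA cjL Bt_def[symmetric] Gt_def[symmetric] vec_eq_iff mul_diag diag_mul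
          diag_nth tr_nth algebra_simps)
    finally show ?thesis by (simp add: vec_eq_iff)
  qed
  have h2: "(Hd + 2 *\<^sub>R Ad H Om + (1/\<tau>) *\<^sub>R H = D) \<longleftrightarrow>
      (\<forall>i j. ((1/2) * (lam (b$i) (b$j) * Bt$i$j) + (h$i - h$j) * Ot$i$j - (Gt$i$j + Gt$j$i)/2)
         + (1/\<tau>) * (if i = j then h$i else 0) = 0)"
  proof -
    have "(Hd + 2 *\<^sub>R Ad H Om + (1/\<tau>) *\<^sub>R H = D) \<longleftrightarrow>
        cj Q (Hd + 2 *\<^sub>R Ad H Om + (1/\<tau>) *\<^sub>R H) - cj Q D = 0"
      using cj_inj[OF oQ] by simp
    also have "cj Q (Hd + 2 *\<^sub>R Ad H Om + (1/\<tau>) *\<^sub>R H) - cj Q D =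
        (\<chi> i j. ((1/2) * (lam (b$i) (b$j) * Bt$i$j) + (h$i - h$j) * Ot$i$j - (Gt$i$j + Gt$j$i)/2)
         + (1/\<tau>) * (if i = j then h$i else 0))"
      unfolding cj_add[OF oQ] cj_scale[OF oQ] cjHd cjAd cjH cjD
      by (simp add: vec_eq_iff mul_diag diag_mul diag_nth Dt_def tr_nth algebra_simps)
    finally show ?thesis by (simp add: vec_eq_iff)
  qed
  have eq2: "(Hd + 2 *\<^sub>R Ad H Om + (1/\<tau>) *\<^sub>R H = D) \<longleftrightarrow>
          (Bd - G ** A - A ** transpose G + (1/\<tau>) *\<^sub>R (A ** mat_log A) = 0)"
    unfolding e2 h2
  proof (intro iff_allI)
    fix i j
    define Y where "Y = (1/2) * (lam (b$i) (b$j) * Bt$i$j) + (h$i - h$j) * Ot$i$j - (Gt$i$j + Gt$j$i)/2"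
    have k: "(2 / lam (b$i) (b$j)) * (Y + (1/\<tau>) * (if i = j then h$i else 0)) =
        Bt$i$j - (Gt$i$j * b$j + b$i * Gt$j$i) + (1/\<tau>) * (if i = j then b$i * ln (b$i) else 0)"
    proof (cases "i = j")
      case True
      have "(2 / lam (b$i) (b$j)) * Y = Bt$i$j - (Gt$i$j * b$j + b$i * Gt$j$i)" using core[of i j] by (simp add: Y_def)
      moreover have "(2 / lam (b$i) (b$j)) * ((1/\<tau>) * h$i) = (1/\<tau>) * (b$i * ln (b$i))"
      proof -
        have l: "lam (b$i) (b$j) = 1 / b$i" using True lamii[of i] by simp
        show ?thesis unfolding l using bpos[of i] tau by (simp add: field_simps h_def)
      qed
      ultimately show ?thesis using True by (simp add: distrib_left)
    next
      case False
      thus ?thesis using core[of i j] by (simp add: Y_def)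
    qed
    have nz: "2 / lam (b$i) (b$j) \<noteq> 0" using lam_nz[of i j] by simp
    show "(Y + (1/\<tau>) * (if i = j then h$i else 0) = 0) \<longleftrightarrow>
       (Bt$i$j - (Gt$i$j * b$j + b$i * Gt$j$i) + (1/\<tau>) * (if i = j then b$i * ln (b$i) else 0) = 0)"
      unfolding k[symmetric] mult_eq_0_iff using nz by blast
  qed
  have anti: "transpose Om = - Om"
  proof -
    have "transpose Ot = - Ot"
    proof -
      have sw: "Ot$j$i = - Ot$i$j" for i j
      proof -
        have "Ot$j$i = (Gt$j$i - Gt$i$j)/2 + Lfun (2 * ((h$i - h$j) / 2)) * ((Gt$j$i + Gt$i$j)/2)"
          unfolding Ot_nth[of j i] Lfun_swap[of "h$j" "h$i"] by (simp only: mult_minus_left diff_minus_eq_add)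
        also have "\<dots> = - Ot$i$j" unfolding Ot_nth[of i j] by (rule anti_lin)
        finally show ?thesis .
      qed
      show ?thesis
      proof (rule vec_eq_iff[THEN iffD2], intro allI)
        fix i
        show "transpose Ot $ i = (- Ot) $ i"
        proof (rule vec_eq_iff[THEN iffD2], intro allI)
          fix j
          show "transpose Ot $ i $ j = (- Ot) $ i $ j" using sw[of i j] by (simp add: transpose_def)
        qed
      qed
    qed
    hence "cj Q (transpose Om) = cj Q (- Om)" by (simp add: cj_transpose[OF oQ] cj_minus[OF oQ] cjOm)
    thus ?thesis using cj_inj[OF oQ] by blast
  qed
  show ?thesis using eq1 eq2 anti by blast
qed


theorem mainTheorem15:
  fixes \<tau> T :: real
    and U :: "(real \<times> (real^'n)) set"
    and v :: "real \<times> (real^'n) \<Rightarrow> real^'n"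
    and B :: "real \<times> (real^'n) \<Rightarrow> real^'n^'n"
  assumes tau_pos: "\<tau> > 0"
    and U_open: "open U"
    and U_sub: "U \<subseteq> {0<..<T} \<times> UNIV"
    and v_smooth: "smooth_on v U"
    and B_smooth: "smooth_on B U"
    and B_spd: "\<forall>p\<in>U. sym_pos_def_mat (B p)"
  defines "W \<equiv> (\<lambda>p. (1/2) *\<^sub>R (grad v p - transpose (grad v p)))"
    and "D \<equiv> (\<lambda>p. (1/2) *\<^sub>R (grad v p + transpose (grad v p)))"
    and "H \<equiv> (\<lambda>p. (1/2) *\<^sub>R mat_log (B p))"
    and "Omega \<equiv> (\<lambda>p. (1/2) *\<^sub>R (grad v p - transpose (grad v p))
             - Ad_fun (\<lambda>x. Lfun (2 * x)) ((1/2) *\<^sub>R mat_log (B p))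
                 ((1/2) *\<^sub>R (grad v p + transpose (grad v p))))"
  shows
    "((\<forall>p\<in>U. dt B p + adv v B p + (1/\<tau>) *\<^sub>R (B p - mat 1)
              = grad v p ** B p + B p ** transpose (grad v p))
      \<longleftrightarrow>
      (\<forall>p\<in>U. dt H p + adv v H p + 2 *\<^sub>R Ad (H p) (Omega p)
              + (1/(2*\<tau>)) *\<^sub>R (mat 1 - mat_exp (- 2 *\<^sub>R H p)) = D p))
     \<and> (\<forall>p\<in>U. transpose (Omega p) = - Omega p)
     \<and> ((\<forall>p\<in>U. dt H p + adv v H p + 2 *\<^sub>R Ad (H p) (Omega p) + (1/\<tau>) *\<^sub>R H p = D p)
      \<longleftrightarrow>
      (\<forall>p\<in>U. dt B p + adv v B p - grad v p ** B p - B p ** transpose (grad v p)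
              + (1/\<tau>) *\<^sub>R (B p ** mat_log (B p)) = 0))"

proof -
  have key: "(dt B p + adv v B p + (1/\<tau>) *\<^sub>R (B p - mat 1)
              = grad v p ** B p + B p ** transpose (grad v p)
      \<longleftrightarrow> dt H p + adv v H p + 2 *\<^sub>R Ad (H p) (Omega p)
              + (1/(2*\<tau>)) *\<^sub>R (mat 1 - mat_exp (- 2 *\<^sub>R H p)) = D p)
     \<and> transpose (Omega p) = - Omega p
     \<and> (dt H p + adv v H p + 2 *\<^sub>R Ad (H p) (Omega p) + (1/\<tau>) *\<^sub>R H p = D p
      \<longleftrightarrow> dt B p + adv v B p - grad v p ** B p - B p ** transpose (grad v p)
              + (1/\<tau>) *\<^sub>R (B p ** mat_log (B p)) = 0)" if pU: "p \<in> U" for p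
  proof -
    have spd: "sym_pos_def_mat (B p)" using B_spd pU by auto
    obtain Q b where se: "sym_eig (B p) = (Q, b)" by fastforce
    have "Ck_on (Suc 0) B U" using B_smooth by (simp only: smooth_on_def)
    hence Bdiff: "B differentiable (at p)" using pU by simp
    define B' where "B' = frechet_derivative B (at p)"
    have dB: "(B has_derivative B') (at p)" using Bdiff by (simp add: B'_def frechet_derivative_works)
    have sub: "B ` U \<subseteq> {X. sym_pos_def_mat X}" using B_spd by auto
    have dlog: "(mat_log has_derivative Lop Q b) (at (B p) within B ` U)"
      by (rule has_derivative_subset[OF log_deriv[OF spd se] sub])
    have "((mat_log \<circ> B) has_derivative (Lop Q b \<circ> B')) (at p within U)"
      by (rule diff_chain_within[OF has_derivative_at_withinI[OF dB] dlog])
    hence "((mat_log \<circ> B) has_derivative (Lop Q b \<circ> B')) (at p)"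
      using at_within_open[OF pU U_open] by simp
    hence "((\<lambda>q. (1/2) *\<^sub>R (mat_log \<circ> B) q) has_derivative (\<lambda>k. (1/2) *\<^sub>R (Lop Q b \<circ> B') k)) (at p)"
      by (rule has_derivative_scaleR_right)
    hence dH: "(H has_derivative (\<lambda>k. (1/2) *\<^sub>R Lop Q b (B' k))) (at p)"
      by (simp add: H_def o_def)
    have fH: "frechet_derivative H (at p) = (\<lambda>k. (1/2) *\<^sub>R Lop Q b (B' k))"
      using frechet_derivative_at[OF dH] by simp
    define Lh where "Lh = (\<lambda>M. (1/2) *\<^sub>R Lop Q b M)"
    have linLh: "linear Lh" unfolding Lh_def
      by (intro linear_compose_scale_right Lop_linear)
    have Hdot: "dt H p + adv v H p = (1/2) *\<^sub>R Lop Q b (dt B p + adv v B p)"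
    proof -
      have "dt H p + adv v H p = Lh (B' (1, 0)) + (\<Sum>j\<in>UNIV. (v p $ j) *\<^sub>R Lh (B' (0, axis j 1)))"
        by (simp add: dt_def adv_def fH Lh_def)
      also have "\<dots> = Lh (B' (1, 0) + (\<Sum>j\<in>UNIV. (v p $ j) *\<^sub>R B' (0, axis j 1)))"
        by (simp add: linear_add[OF linLh] linear_sum[OF linLh] linear_scale[OF linLh])
      also have "\<dots> = (1/2) *\<^sub>R Lop Q b (dt B p + adv v B p)"
        by (simp add: Lh_def dt_def adv_def B'_def)
      finally show ?thesis .
    qed
    have h1: "H p = (1/2) *\<^sub>R mat_log (B p)" by (simp add: H_def)
    have h2: "D p = (1/2) *\<^sub>R (grad v p + transpose (grad v p))" by (simp add: D_def)
    have h3: "Omega p = (1/2) *\<^sub>R (grad v p - transpose (grad v p))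
             - Ad_fun (\<lambda>x. Lfun (2 * x)) ((1/2) *\<^sub>R mat_log (B p))
                 ((1/2) *\<^sub>R (grad v p + transpose (grad v p)))" by (simp add: Omega_def)
    show ?thesis
      unfolding Hdot h1 h2 h3
      by (rule pointwise[OF spd se tau_pos, of "dt B p + adv v B p" "grad v p"])
  qed
  show ?thesis using key by blast
qed


end
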